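(* Let $E$ be a reflexive, strictly convex Banach space and $C$ a closed convex subset of $E$. Suppose that $\mathcal{S}=\{T_s:s\in S\}$ is a representation of a semigroup $S$ on $C$ by self-mappings each of which is weakly continuous (i.e. continuous from $(C,\mathrm{wk})$ to $(C,\mathrm{wk})$) and norm asymptotically nonexpansive. Then the following are equivalent: (1) there is a closed, $S$-invariant convex subset $C_0$ of $C$ such that $A_{C_0}(\mathcal{S})\neq\emptyset$; (2) there is a closed, $S$-invariant convex subset $C_0$ of $C$ such that $AA_{C_0}(\mathcal{S})\neq\emptyset$; (3) $S$ has a common fixed point in $C$.
   Context: A representation of a semigroup $S$ on $C$ is a family of maps $T_s:C\to C$ with $T_{st}=T_s\circ T_t$. A map $T:C\to C$ is (norm) asymptotically nonexpansive if $\limsup_{n\to\infty}\|T^nx-T^ny\|\le\|x-y\|$ for all $x,y\in C$ (no continuity is implied by this). For $D\subseteq C$: $A_D(\mathcal{S})$ is the set of $a\in E$ with $\|a-T_sx\|\le\|a-x\|$ for all $x\in D$, $s\in S$ (attractive points); $AA_D(\mathcal{S})$ is the set of $a\in E$ with $\limsup_{n\to\infty}\|a-(T_t)^n x\|\le\|a-x\|$ for all $x\in D$, $t\in S$ (asymptotically attractive points). $C_0$ is $S$-invariant if $T_s(C_0)\subseteq C_0$ for all $s$. A common fixed point is $x\in C$ with $T_sx=x$ for all $s$. *)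

theory Defs
  imports "HOL-Analysis.Analysis"
begin

definition reflexive_space :: "'a::real_normed_vector itself \<Rightarrow> bool" where
  "reflexive_space _ \<longleftrightarrow>
     (\<forall>\<Phi> :: ('a \<Rightarrow> real) \<Rightarrow> real.
        ((\<forall>f g. bounded_linear f \<longrightarrow> bounded_linear g \<longrightarrow> \<Phi> (\<lambda>x. f x + g x) = \<Phi> f + \<Phi> g)
         \<and> (\<forall>f c. bounded_linear f \<longrightarrow> \<Phi> (\<lambda>x. c * f x) = c * \<Phi> f)
         \<and> (\<exists>K. \<forall>f. bounded_linear f \<longrightarrow> \<bar>\<Phi> f\<bar> \<le> K * onorm f))
        \<longrightarrow> (\<exists>x::'a. \<forall>f. bounded_linear f \<longrightarrow> \<Phi> f = f x))"

definition strictly_convex_space :: "'a::real_normed_vector itself \<Rightarrow> bool" where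
  "strictly_convex_space _ \<longleftrightarrow>
     (\<forall>x y::'a. norm x = 1 \<and> norm y = 1 \<and> x \<noteq> y \<longrightarrow> norm ((1/2) *\<^sub>R (x + y)) < 1)"

definition weak_topology :: "'a::real_normed_vector topology" where
  "weak_topology = topology_generated_by {f -` U | f U. bounded_linear (f :: 'a \<Rightarrow> real) \<and> open U}"

definition asymp_nonexpansive_on :: "'a::real_normed_vector set \<Rightarrow> ('a \<Rightarrow> 'a) \<Rightarrow> bool" where
  "asymp_nonexpansive_on C T \<longleftrightarrow>
     (\<forall>x\<in>C. \<forall>y\<in>C. limsup (\<lambda>n. ereal (norm ((T ^^ n) x - (T ^^ n) y))) \<le> ereal (norm (x - y)))"

definition representation_on :: "'a set \<Rightarrow> ('s::semigroup_mult \<Rightarrow> 'a \<Rightarrow> 'a) \<Rightarrow> bool" where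
  "representation_on C T \<longleftrightarrow>
     (\<forall>s. T s ` C \<subseteq> C) \<and> (\<forall>s t. \<forall>x\<in>C. T (s * t) x = T s (T t x))"

definition attractive_points :: "'a set \<Rightarrow> ('s \<Rightarrow> 'a \<Rightarrow> 'a) \<Rightarrow> 'a::real_normed_vector set" where
  "attractive_points D T = {a. \<forall>x\<in>D. \<forall>s. norm (a - T s x) \<le> norm (a - x)}"

definition asymp_attractive_points :: "'a set \<Rightarrow> ('s \<Rightarrow> 'a \<Rightarrow> 'a) \<Rightarrow> 'a::real_normed_vector set" where
  "asymp_attractive_points D T =
     {a. \<forall>x\<in>D. \<forall>t. limsup (\<lambda>n. ereal (norm (a - (T t ^^ n) x))) \<le> ereal (norm (a - x))}"

definition invariant_under :: "'a set \<Rightarrow> ('s \<Rightarrow> 'a \<Rightarrow> 'a) \<Rightarrow> bool" where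
  "invariant_under C0 T \<longleftrightarrow> (\<forall>s. T s ` C0 \<subseteq> C0)"

end

theory Submission imports Defs begin


definition sublin :: "('v::real_vector \<Rightarrow> real) \<Rightarrow> bool" where
  "sublin p \<longleftrightarrow> p 0 = 0 \<and> (\<forall>x y. p (x + y) \<le> p x + p y) \<and> (\<forall>c x. c > 0 \<longrightarrow> p (c *\<^sub>R x) \<le> c * p x)"

lemma sublin_homog:
  assumes "sublin p" "c \<ge> 0" shows "p (c *\<^sub>R x) = c * p x"
proof (cases "c = 0")
  case True then show ?thesis using assms by (simp add: sublin_def)
next
  case False
  then have c: "c > 0" using assms by simp
  have 1: "p (c *\<^sub>R x) \<le> c * p x" using assms c by (simp add: sublin_def)
  have h: "\<forall>c x. c > 0 \<longrightarrow> p (c *\<^sub>R x) \<le> c * p x" using assms by (simp add: sublin_def)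
  have "p ((1/c) *\<^sub>R (c *\<^sub>R x)) \<le> (1/c) * p (c *\<^sub>R x)" by (rule h[rule_format]) (use c in simp)
  then have "p x \<le> p (c *\<^sub>R x) / c" using c by simp
  then have "c * p x \<le> p (c *\<^sub>R x)" using c by (simp add: pos_le_divide_eq mult.commute)
  with 1 show ?thesis by simp
qed

lemma sublin_neg: assumes "sublin p" shows "- p (- x) \<le> p x"
proof -
  have "p (x + - x) \<le> p x + p (- x)" using assms by (simp only: sublin_def)
  then show ?thesis using assms by (simp add: sublin_def)
qed

definition shiftf :: "('v::real_vector \<Rightarrow> real) \<Rightarrow> 'v \<Rightarrow> 'v \<Rightarrow> real" where
  "shiftf r x y = Inf ((\<lambda>t. r (y + t *\<^sub>R x) - t * r x) ` {0..})"

lemma shiftf_lb: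
  assumes "sublin r" "t \<ge> 0" shows "- r (- y) \<le> r (y + t *\<^sub>R x) - t * r x"
proof -
  have "t * r x = r (t *\<^sub>R x)" using sublin_homog[OF assms] by simp
  also have "\<dots> = r ((y + t *\<^sub>R x) + - y)" by simp
  also have "\<dots> \<le> r (y + t *\<^sub>R x) + r (- y)" using assms(1) by (simp only: sublin_def)
  finally show ?thesis by simp
qed

lemma shiftf_bdd: "sublin r \<Longrightarrow> bdd_below ((\<lambda>t. r (y + t *\<^sub>R x) - t * r x) ` {0..})"
  by (rule bdd_belowI2[where m="- r (- y)"]) (auto intro: shiftf_lb)

lemma shiftf_le:
  assumes "sublin r" "t \<ge> 0" shows "shiftf r x y \<le> r (y + t *\<^sub>R x) - t * r x"
  unfolding shiftf_def using assms by (intro cInf_lower shiftf_bdd) auto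

lemma shiftf_ge:
  assumes "\<And>t. t \<ge> 0 \<Longrightarrow> m \<le> r (y + t *\<^sub>R x) - t * r x" shows "m \<le> shiftf r x y"
  unfolding shiftf_def using assms by (intro cInf_greatest) auto

lemma shiftf_props:
  assumes r: "sublin r"
  shows "sublin (shiftf r x)" "\<And>y. shiftf r x y \<le> r y" "shiftf r x (- x) \<le> - r x"
proof -
  show "shiftf r x y \<le> r y" for y using shiftf_le[OF r, of 0] by simp
  show "shiftf r x (- x) \<le> - r x" using shiftf_le[OF r, of 1 x "-x"] r by (simp add: sublin_def)
  have z: "shiftf r x 0 = 0"
  proof (rule antisym)
    show "shiftf r x 0 \<le> 0" using shiftf_le[OF r, where t=0 and y=0] r by (simp add: sublin_def)
    show "0 \<le> shiftf r x 0" by (rule shiftf_ge) (simp add: sublin_homog[OF r])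
  qed
  have add: "shiftf r x (y1 + y2) \<le> shiftf r x y1 + shiftf r x y2" for y1 y2
  proof -
    have "shiftf r x (y1 + y2) - (r (y2 + t2 *\<^sub>R x) - t2 * r x) \<le> shiftf r x y1" if t2: "t2 \<ge> 0" for t2
    proof (rule shiftf_ge)
      fix t1 :: real assume t1: "t1 \<ge> 0"
      have "shiftf r x (y1 + y2) \<le> r ((y1 + y2) + (t1 + t2) *\<^sub>R x) - (t1 + t2) * r x"
        using t1 t2 by (intro shiftf_le[OF r]) simp
      also have "r ((y1 + y2) + (t1 + t2) *\<^sub>R x) = r ((y1 + t1 *\<^sub>R x) + (y2 + t2 *\<^sub>R x))"
        by (simp add: algebra_simps)
      also have "\<dots> \<le> r (y1 + t1 *\<^sub>R x) + r (y2 + t2 *\<^sub>R x)" using r by (simp only: sublin_def)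
      finally show "shiftf r x (y1 + y2) - (r (y2 + t2 *\<^sub>R x) - t2 * r x) \<le> r (y1 + t1 *\<^sub>R x) - t1 * r x"
        by (simp add: algebra_simps)
    qed
    then have "shiftf r x (y1 + y2) - shiftf r x y1 \<le> shiftf r x y2"
      by (intro shiftf_ge) (simp add: algebra_simps)
    then show ?thesis by simp
  qed
  have hom: "shiftf r x (c *\<^sub>R y) \<le> c * shiftf r x y" if c: "c > 0" for c y
  proof -
    have "shiftf r x (c *\<^sub>R y) / c \<le> shiftf r x y"
    proof (rule shiftf_ge)
      fix s :: real assume s: "s \<ge> 0"
      have "shiftf r x (c *\<^sub>R y) \<le> r (c *\<^sub>R y + (c * s) *\<^sub>R x) - (c * s) * r x"
        using s c by (intro shiftf_le[OF r]) simp
      also have "r (c *\<^sub>R y + (c * s) *\<^sub>R x) = r (c *\<^sub>R (y + s *\<^sub>R x))" by (simp add: algebra_simps)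
      also have "\<dots> = c * r (y + s *\<^sub>R x)" using sublin_homog[OF r] c by simp
      finally show "shiftf r x (c *\<^sub>R y) / c \<le> r (y + s *\<^sub>R x) - s * r x"
        using c by (simp add: field_simps)
    qed
    then show ?thesis using c by (simp add: field_simps)
  qed
  show "sublin (shiftf r x)" unfolding sublin_def using z add hom by blast
qed


lemma HB_basic:
  fixes q :: "'v::real_vector \<Rightarrow> real"
  assumes q: "sublin q"
  shows "\<exists>f. linear f \<and> (\<forall>x. f x \<le> q x)"
proof -
  define A where "A = {p :: 'v \<Rightarrow> real. sublin p \<and> (\<forall>x. p x \<le> q x)}"
  define P where "P = (\<lambda>a b :: 'v \<Rightarrow> real. \<forall>x. b x \<le> a x)"
  have po: "partial_order_on A (relation_of P A)"
    by (rule partial_order_on_relation_ofI) (auto simp: P_def intro: order_trans antisym ext, meson antisym ext)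
  have ch: "\<exists>u \<in> A. \<forall>a \<in> C. P a u" if C: "C \<in> Chains (relation_of P A)" for C
  proof (cases "C = {}")
    case True
    then show ?thesis using q by (auto simp: A_def)
  next
    case False
    have CA: "C \<subseteq> A" using C by (auto simp: Chains_def relation_of_def)
    have comp: "P a b \<or> P b a" if "a \<in> C" "b \<in> C" for a b
      using C that by (auto simp: Chains_def relation_of_def)
    define u where "u = (\<lambda>x. Inf ((\<lambda>p. p x) ` C))"
    have bdd: "bdd_below ((\<lambda>p. p x) ` C)" for x
    proof (rule bdd_belowI2[where m="- q (- x)"])
      fix p assume "p \<in> C"
      then have "sublin p" "p (- x) \<le> q (- x)" using CA by (auto simp: A_def)
      then show "- q (- x) \<le> p x" using sublin_neg[of p x] by simp
    qed
    have ule: "u x \<le> p x" if "p \<in> C" for p x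
      unfolding u_def using that bdd by (intro cInf_lower) auto
    have uge: "m \<le> u x" if "\<And>p. p \<in> C \<Longrightarrow> m \<le> p x" for m x
      unfolding u_def using that False by (intro cInf_greatest) auto
    have sl: "sublin p" if "p \<in> C" for p using that CA by (auto simp: A_def)
    have u0: "u 0 = 0"
    proof (rule antisym)
      obtain p where "p \<in> C" using False by blast
      then show "u 0 \<le> 0" using ule[of p 0] sl[of p] by (simp add: sublin_def)
      show "0 \<le> u 0" by (rule uge) (use sl in \<open>force simp add: sublin_def\<close>)
    qed
    have uadd: "u (x + y) \<le> u x + u y" for x y
    proof -
      have "u (x + y) - p2 y \<le> u x" if p2: "p2 \<in> C" for p2
      proof (rule uge)
        fix p1 assume p1: "p1 \<in> C"
        have "u (x + y) \<le> p1 x + p2 y"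
        proof (cases "P p1 p2")
          case True
          have "u (x + y) \<le> p2 (x + y)" using ule p2 by blast
          also have "\<dots> \<le> p2 x + p2 y" using sl[OF p2] by (simp add: sublin_def)
          also have "\<dots> \<le> p1 x + p2 y" using True by (simp add: P_def)
          finally show ?thesis .
        next
          case False
          then have "P p2 p1" using comp p1 p2 by blast
          have "u (x + y) \<le> p1 (x + y)" using ule p1 by blast
          also have "\<dots> \<le> p1 x + p1 y" using sl[OF p1] by (simp add: sublin_def)
          also have "\<dots> \<le> p1 x + p2 y" using \<open>P p2 p1\<close> by (simp add: P_def)
          finally show ?thesis .
        qed
        then show "u (x + y) - p2 y \<le> p1 x" by simp
      qed
      then have "u (x + y) - u x \<le> u y" by (intro uge) (simp add: algebra_simps)
      then show ?thesis by simp
    qed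
    have uhom: "u (c *\<^sub>R x) \<le> c * u x" if c: "c > 0" for c x
    proof -
      have "u (c *\<^sub>R x) / c \<le> u x"
      proof (rule uge)
        fix p assume p: "p \<in> C"
        have "u (c *\<^sub>R x) \<le> p (c *\<^sub>R x)" using ule p by blast
        also have "\<dots> = c * p x" using sublin_homog[OF sl[OF p]] c by simp
        finally show "u (c *\<^sub>R x) / c \<le> p x" using c by (simp add: field_simps)
      qed
      then show ?thesis using c by (simp add: field_simps)
    qed
    have "u \<in> A"
    proof -
      obtain p where p: "p \<in> C" using False by blast
      have "u x \<le> q x" for x proof -
        have "p x \<le> q x" using p CA by (auto simp: A_def)
        then show ?thesis using ule[OF p, of x] by linarith
      qed
      then show ?thesis unfolding A_def sublin_def using u0 uadd uhom by blast
    qed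
    moreover have "\<forall>a \<in> C. P a u" using ule by (simp add: P_def)
    ultimately show ?thesis by blast
  qed
  obtain m where mA: "m \<in> A" and mmin: "\<And>a. a \<in> A \<Longrightarrow> P m a \<Longrightarrow> a = m"
    using predicate_Zorn[OF po ch] by blast
  have msl: "sublin m" using mA by (simp add: A_def)
  have mneg: "m (- x) = - m x" for x
  proof -
    have "shiftf m x y \<le> q y" for y
    proof -
      have "m y \<le> q y" using mA by (simp add: A_def)
      then show ?thesis using shiftf_props(2)[OF msl, of x y] by linarith
    qed
    then have "shiftf m x \<in> A" using shiftf_props(1)[OF msl, of x] by (simp add: A_def)
    moreover have "P m (shiftf m x)" using shiftf_props[OF msl, of x] by (simp add: P_def)
    ultimately have "shiftf m x = m" using mmin by blast
    then have "m (- x) \<le> - m x" using shiftf_props(3)[OF msl, of x] by simp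
    moreover have "- m (- x) \<le> m x" using sublin_neg[OF msl] by simp
    ultimately show ?thesis by simp
  qed
  have madd: "m (x + y) = m x + m y" for x y
  proof (rule antisym)
    show "m (x + y) \<le> m x + m y" using msl by (simp add: sublin_def)
    have "m (- x + - y) \<le> m (- x) + m (- y)" using msl by (simp only: sublin_def)
    then have "m (- (x + y)) \<le> - m x - m y" using mneg by (simp add: algebra_simps)
    then show "m x + m y \<le> m (x + y)" using mneg[of "x + y"] by simp
  qed
  have mscale: "m (c *\<^sub>R x) = c * m x" for c x
  proof (cases "c \<ge> 0")
    case True then show ?thesis using sublin_homog[OF msl] by simp
  next
    case False
    have "m (c *\<^sub>R x) = m (- ((- c) *\<^sub>R x))" by simp
    also have "\<dots> = - m ((- c) *\<^sub>R x)" by (rule mneg)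
    also have "\<dots> = c * m x" using sublin_homog[OF msl, of "- c" x] False by simp
    finally show ?thesis .
  qed
  have "linear m" by (rule linearI) (simp_all add: madd mscale)
  moreover have "\<forall>x. m x \<le> q x" using mA by (simp add: A_def)
  ultimately show ?thesis by blast
qed

lemma HB:
  fixes q :: "'v::real_vector \<Rightarrow> real"
  assumes q: "sublin q"
  shows "\<exists>f. linear f \<and> (\<forall>x. f x \<le> q x) \<and> f x0 = q x0"
proof -
  obtain f where f: "linear f" "\<forall>x. f x \<le> shiftf q x0 x"
    using HB_basic[OF shiftf_props(1)[OF q, of x0]] by blast
  have le: "f x \<le> q x" for x using f(2) shiftf_props(2)[OF q, of x0 x] by (meson order_trans)
  have "f x0 = - f (- x0)" using linear_neg[OF f(1), of x0] by simp
  also have "\<dots> \<ge> q x0" using f(2) shiftf_props(3)[OF q, of x0] by (smt (verit))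
  finally have "q x0 \<le> f x0" .
  with le[of x0] have "f x0 = q x0" by simp
  with f(1) le show ?thesis by blast
qed


lemma lin_bounded:
  fixes g :: "'a::real_normed_vector \<Rightarrow> real"
  assumes g: "linear g" and le: "\<And>y. g y \<le> C * norm y"
  shows "bounded_linear g" "\<And>y. \<bar>g y\<bar> \<le> C * norm y"
proof -
  have "\<bar>g y\<bar> \<le> C * norm y" for y
  proof -
    have "- g y = g (- y)" using linear_neg[OF g] by simp
    also have "\<dots> \<le> C * norm y" using le[of "- y"] by simp
    finally show ?thesis using le[of y] by linarith
  qed
  then show "\<And>y. \<bar>g y\<bar> \<le> C * norm y" .
  show "bounded_linear g"
    by (rule bounded_linear_intro[where K=C])
      (auto simp: linear_add[OF g] linear_scale[OF g] \<open>\<And>y. \<bar>g y\<bar> \<le> C * norm y\<close> mult.commute)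
qed

lemma sublin_norm: "sublin (norm :: 'a::real_normed_vector \<Rightarrow> real)"
  unfolding sublin_def by (auto simp: norm_triangle_ineq)

lemma norming:
  fixes x0 :: "'a::real_normed_vector"
  shows "\<exists>g. bounded_linear g \<and> (\<forall>y. \<bar>g y\<bar> \<le> norm y) \<and> g x0 = norm x0"
proof -
  obtain g where g: "linear g" "\<forall>y. g y \<le> norm y" "g x0 = norm x0"
    using HB[OF sublin_norm, of x0] by blast
  show ?thesis using lin_bounded[OF g(1), of 1] g by auto
qed

lemma separate_points:
  fixes x y :: "'a::real_normed_vector"
  assumes "\<And>g::'a \<Rightarrow> real. bounded_linear g \<Longrightarrow> g x = g y" shows "x = y"
proof -
  obtain g where g: "bounded_linear g" "g (x - y) = norm (x - y)" using norming by blast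
  have "g (x - y) = g x - g y" using g(1) by (simp add: linear_diff bounded_linear.linear)
  then show ?thesis using assms[OF g(1)] g(2) by simp
qed

lemma separation:
  fixes K :: "'a::real_normed_vector set"
  assumes cv: "convex K" and ne: "K \<noteq> {}" and dp: "\<delta> > 0" and far: "\<forall>k\<in>K. \<delta> \<le> norm k"
  shows "\<exists>f. bounded_linear f \<and> (\<forall>k\<in>K. \<delta> \<le> f k)"
proof -
  define val where "val = (\<lambda>(y::'a) (t::real) (k::'a). norm (y + t *\<^sub>R k) - t * \<delta>)"
  define q where "q = (\<lambda>y. Inf ((\<lambda>(t, k). val y t k) ` ({0..} \<times> K)))"
  obtain k0 where k0: "k0 \<in> K" using ne by blast
  have lb: "- norm y \<le> val y t k" if "t \<ge> 0" "k \<in> K" for y t k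
  proof -
    have "norm (t *\<^sub>R k) \<le> norm (y + t *\<^sub>R k) + norm y"
      using norm_triangle_ineq4[of "y + t *\<^sub>R k" y] by simp
    moreover have "t * \<delta> \<le> norm (t *\<^sub>R k)" using far that by (simp add: mult_left_mono)
    ultimately show ?thesis unfolding val_def by simp
  qed
  have qle: "q y \<le> val y t k" if "t \<ge> 0" "k \<in> K" for y t k
    unfolding q_def
    by (rule cInf_lower) (use that lb in \<open>auto intro!: bdd_belowI2[where m="- norm y"]\<close>)
  have qge: "m \<le> q y" if "\<And>t k. t \<ge> 0 \<Longrightarrow> k \<in> K \<Longrightarrow> m \<le> val y t k" for m y
    unfolding q_def by (rule cInf_greatest) (use that ne in auto)
  have q0: "q 0 = 0"
  proof (rule antisym)
    show "q 0 \<le> 0" using qle[of 0 k0 0] k0 by (simp add: val_def)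
    show "0 \<le> q 0"
    proof (rule qge)
      fix t k assume "t \<ge> (0::real)" "k \<in> K"
      then show "0 \<le> val 0 t k" using far by (simp add: val_def mult_left_mono)
    qed
  qed
  have qadd: "q (y1 + y2) \<le> q y1 + q y2" for y1 y2
  proof -
    have main: "q (y1 + y2) \<le> val y1 t1 k1 + val y2 t2 k2"
      if t1: "t1 \<ge> 0" and k1: "k1 \<in> K" and t2: "t2 \<ge> 0" and k2: "k2 \<in> K" for t1 k1 t2 k2
    proof (cases "t1 + t2 = 0")
      case True
      then have "t1 = 0" "t2 = 0" using t1 t2 by auto
      then show ?thesis using qle[of 0 k1 "y1 + y2"] k1 norm_triangle_ineq[of y1 y2] by (simp add: val_def)
    next
      case False
      define s where "s = t1 + t2"
      have s: "s > 0" using False t1 t2 by (simp add: s_def)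
      define k where "k = (t1 / s) *\<^sub>R k1 + (t2 / s) *\<^sub>R k2"
      have "k \<in> K" unfolding k_def using cv k1 k2 t1 t2 s
        by (intro convexD) (auto simp: s_def add_divide_distrib[symmetric])
      have sk: "s *\<^sub>R k = t1 *\<^sub>R k1 + t2 *\<^sub>R k2" using s by (simp add: k_def scaleR_add_right)
      have "q (y1 + y2) \<le> val (y1 + y2) s k" using qle \<open>k \<in> K\<close> s by simp
      also have "\<dots> = norm ((y1 + t1 *\<^sub>R k1) + (y2 + t2 *\<^sub>R k2)) - t1 * \<delta> - t2 * \<delta>"
        unfolding val_def sk by (simp add: s_def algebra_simps)
      also have "\<dots> \<le> val y1 t1 k1 + val y2 t2 k2"
        unfolding val_def using norm_triangle_ineq[of "y1 + t1 *\<^sub>R k1" "y2 + t2 *\<^sub>R k2"] by simp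
      finally show ?thesis .
    qed
    have "q (y1 + y2) - val y2 t2 k2 \<le> q y1" if "t2 \<ge> 0" "k2 \<in> K" for t2 k2
      by (rule qge) (use main that in force)
    then have "q (y1 + y2) - q y1 \<le> q y2" by (intro qge) (force simp: algebra_simps)
    then show ?thesis by simp
  qed
  have qhom: "q (c *\<^sub>R y) \<le> c * q y" if c: "c > 0" for c y
  proof -
    have "q (c *\<^sub>R y) / c \<le> q y"
    proof (rule qge)
      fix t :: real and k assume t: "t \<ge> 0" and k: "k \<in> K"
      have "q (c *\<^sub>R y) \<le> val (c *\<^sub>R y) (c * t) k" using qle t k c by simp
      also have "\<dots> = norm (c *\<^sub>R (y + t *\<^sub>R k)) - c * t * \<delta>" by (simp add: val_def algebra_simps)
      also have "\<dots> = c * val y t k" unfolding val_def norm_scaleR using c by (simp add: algebra_simps)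
      finally show "q (c *\<^sub>R y) / c \<le> val y t k" using c by (simp add: field_simps)
    qed
    then show ?thesis using c by (simp add: field_simps)
  qed
  have "sublin q" unfolding sublin_def using q0 qadd qhom by blast
  then obtain f where f: "linear f" "\<forall>x. f x \<le> q x" using HB_basic by blast
  have "f y \<le> 1 * norm y" for y using f(2) qle[of 0 k0 y] k0 by (simp add: val_def) (smt (verit))
  then have bl: "bounded_linear f" using lin_bounded[OF f(1)] by blast
  have "\<delta> \<le> f k" if "k \<in> K" for k
  proof -
    have "f (- k) \<le> val (- k) 1 k" using f(2) qle[of 1 k "- k"] that by (smt (verit))
    then have "f (- k) \<le> - \<delta>" by (simp add: val_def)
    then show ?thesis using linear_neg[OF f(1), of k] by simp
  qed
  with bl show ?thesis by blast
qed


lemma key: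
  fixes C0 :: "'a::real_normed_vector set" and v :: "nat \<Rightarrow> 'a"
  assumes refl: "reflexive_space TYPE('a)" and cl: "closed C0" and cv: "convex C0"
    and vC: "\<And>n. v n \<in> C0"
    and ev: "\<And>e. e > 0 \<Longrightarrow> eventually (\<lambda>n. norm (a - v n) \<le> r + e) sequentially"
    and f0: "bounded_linear f0"
  shows "\<exists>x\<in>C0. norm (a - x) \<le> r \<and> ereal (f0 x) = limsup (\<lambda>n. ereal (f0 (v n)))"
proof -
  define B where "B = norm a + r + 1"
  have evB: "eventually (\<lambda>n. norm (v n) \<le> B) sequentially"
    using ev[of 1, OF zero_less_one]
  proof (rule eventually_mono)
    fix n assume "norm (a - v n) \<le> r + 1"
    moreover have "norm (v n) \<le> norm a + norm (a - v n)"
      using norm_triangle_ineq4[of a "a - v n"] by simp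
    ultimately show "norm (v n) \<le> B" by (simp add: B_def)
  qed
  define ls where "ls = (\<lambda>g::'a \<Rightarrow>\<^sub>L real. limsup (\<lambda>n. ereal (blinfun_apply g (v n))))"
  have lsb: "ls g \<le> ereal (norm g * B) \<and> ereal (- (norm g * B)) \<le> ls g" for g
  proof -
    have e: "eventually (\<lambda>n. \<bar>blinfun_apply g (v n)\<bar> \<le> norm g * B) sequentially"
      using evB
    proof (rule eventually_mono)
      fix n assume "norm (v n) \<le> B"
      then have "norm g * norm (v n) \<le> norm g * B" by (simp add: mult_left_mono)
      then show "\<bar>blinfun_apply g (v n)\<bar> \<le> norm g * B" using norm_blinfun[of g "v n"] by simp
    qed
    have "ls g \<le> ereal (norm g * B)" unfolding ls_def
      by (rule Limsup_bounded) (use e in \<open>auto elim!: eventually_mono\<close>)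
    moreover have "ereal (- (norm g * B)) \<le> ls g" unfolding ls_def
      by (rule le_Limsup) (use e in \<open>auto elim!: eventually_mono\<close>)
    ultimately show ?thesis by simp
  qed
  define q where "q = (\<lambda>g. real_of_ereal (ls g))"
  have lsq: "ls g = ereal (q g)" for g
  proof -
    have "\<bar>ls g\<bar> \<noteq> \<infinity>" using lsb[of g] by auto
    then show ?thesis unfolding q_def by (simp add: ereal_real')
  qed
  have qb: "q g \<le> norm g * B" for g using lsb[of g] lsq[of g] by simp
  have sq: "sublin q"
  proof -
    have "ls 0 = 0" unfolding ls_def by (simp add: Limsup_const zero_ereal_def)
    then have "q 0 = 0" using lsq[of 0] by (simp add: zero_ereal_def)
    moreover have "q (g + h) \<le> q g + q h" for g h
    proof -
      have "ls (g + h) = limsup (\<lambda>n. ereal (blinfun_apply g (v n)) + ereal (blinfun_apply h (v n)))"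
        unfolding ls_def by (simp add: blinfun.add_left)
      also have "\<dots> \<le> ls g + ls h" unfolding ls_def by (rule ereal_limsup_add_mono)
      finally show ?thesis unfolding lsq by simp
    qed
    moreover have "q (c *\<^sub>R g) \<le> c * q g" if "c > 0" for c g
    proof -
      have "ls (c *\<^sub>R g) = limsup (\<lambda>n. ereal c * ereal (blinfun_apply g (v n)))"
        unfolding ls_def by (simp add: blinfun.scaleR_left)
      also have "\<dots> = ereal c * ls g" unfolding ls_def by (rule limsup_ereal_mult_left) (use that in simp)
      finally show ?thesis unfolding lsq by simp
    qed
    ultimately show ?thesis unfolding sublin_def by blast
  qed
  obtain \<Psi> where \<Psi>: "linear \<Psi>" "\<And>g. \<Psi> g \<le> q g" "\<Psi> (Blinfun f0) = q (Blinfun f0)"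
    using HB[OF sq, of "Blinfun f0"] by blast
  define \<Phi> where "\<Phi> = (\<lambda>f::'a \<Rightarrow> real. \<Psi> (Blinfun f))"
  have BA: "blinfun_apply (Blinfun f) = f" if "bounded_linear f" for f
    using that by (rule bounded_linear_Blinfun_apply)
  have "\<exists>x::'a. \<forall>f. bounded_linear f \<longrightarrow> \<Phi> f = f x"
  proof (rule refl[unfolded reflexive_space_def, rule_format], intro conjI allI impI)
    fix f g :: "'a \<Rightarrow> real" assume f: "bounded_linear f" and g: "bounded_linear g"
    have "Blinfun (\<lambda>x. f x + g x) = Blinfun f + Blinfun g"
      by (rule blinfun_eqI) (simp add: BA f g bounded_linear_add blinfun.add_left)
    then show "\<Phi> (\<lambda>x. f x + g x) = \<Phi> f + \<Phi> g" unfolding \<Phi>_def by (simp add: linear_add[OF \<Psi>(1)])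
  next
    fix f :: "'a \<Rightarrow> real" and c :: real assume f: "bounded_linear f"
    have "Blinfun (\<lambda>x. c * f x) = c *\<^sub>R Blinfun f"
      by (rule blinfun_eqI) (simp add: BA f bounded_linear_const_mult blinfun.scaleR_left)
    then show "\<Phi> (\<lambda>x. c * f x) = c * \<Phi> f" unfolding \<Phi>_def by (simp add: linear_scale[OF \<Psi>(1)])
  next
    show "\<exists>K. \<forall>f. bounded_linear f \<longrightarrow> \<bar>\<Phi> f\<bar> \<le> K * onorm f"
    proof (intro exI allI impI)
      fix f :: "'a \<Rightarrow> real" assume f: "bounded_linear f"
      have nf: "norm (Blinfun f) = onorm f" by (simp add: norm_blinfun.rep_eq BA f)
      have "\<Psi> (Blinfun f) \<le> norm (Blinfun f) * B" using \<Psi>(2)[of "Blinfun f"] qb[of "Blinfun f"] by linarith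
      moreover have "- \<Psi> (Blinfun f) \<le> norm (Blinfun f) * B"
        using \<Psi>(2)[of "- Blinfun f"] qb[of "- Blinfun f"] linear_neg[OF \<Psi>(1), of "Blinfun f"] by simp
      ultimately show "\<bar>\<Phi> f\<bar> \<le> B * onorm f" unfolding \<Phi>_def nf by (simp add: mult.commute)
    qed
  qed
  then obtain x where x: "\<And>f. bounded_linear f \<Longrightarrow> \<Phi> f = f x" by blast
  have A: "ereal (f x) \<le> limsup (\<lambda>n. ereal (f (v n)))" if f: "bounded_linear f" for f
  proof -
    have "f x = \<Psi> (Blinfun f)" using x[OF f] by (simp add: \<Phi>_def)
    also have "\<dots> \<le> q (Blinfun f)" by (rule \<Psi>(2))
    finally have "ereal (f x) \<le> ls (Blinfun f)" unfolding lsq by simp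
    then show ?thesis unfolding ls_def BA[OF f] .
  qed
  have Bf0: "ereal (f0 x) = limsup (\<lambda>n. ereal (f0 (v n)))"
  proof -
    have "f0 x = q (Blinfun f0)" using x[OF f0] \<Psi>(3) by (simp add: \<Phi>_def)
    then have "ereal (f0 x) = ls (Blinfun f0)" unfolding lsq by simp
    then show ?thesis unfolding ls_def BA[OF f0] .
  qed
  have xC: "x \<in> C0"
  proof (rule ccontr)
    assume "x \<notin> C0"
    then obtain e where e: "e > 0" "ball x e \<subseteq> - C0"
      using cl open_contains_ball[of "- C0"] by (auto simp: closed_def)
    have far: "\<forall>k\<in>(\<lambda>k. k - x) ` C0. e \<le> norm k"
    proof
      fix k assume "k \<in> (\<lambda>k. k - x) ` C0"
      then obtain c where c: "c \<in> C0" "k = c - x" by blast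
      then have "c \<notin> ball x e" using e by blast
      then show "e \<le> norm k" using c by (simp add: dist_norm norm_minus_commute)
    qed
    obtain f where f: "bounded_linear f" "\<forall>k\<in>(\<lambda>k. k - x) ` C0. e \<le> f k"
      using separation[OF convex_translation_subtract[OF cv] _ e(1) far] vC[of 0] by (metis empty_iff image_eqI)
    have fle: "- f (v n) \<le> - f x - e" for n
    proof -
      have "e \<le> f (v n - x)" using f(2) vC[of n] by blast
      then show ?thesis using f(1) by (simp add: linear_diff bounded_linear.linear)
    qed
    have "ereal (- f x) \<le> limsup (\<lambda>n. ereal (- f (v n)))"
      using A[of "\<lambda>y. - f y"] f(1) bounded_linear_minus by blast
    also have "\<dots> \<le> ereal (- f x - e)" by (rule Limsup_bounded) (simp add: fle)
    finally show False using e(1) by simp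
  qed
  have xr: "norm (a - x) \<le> r"
  proof -
    obtain g where g: "bounded_linear g" "\<forall>y. \<bar>g y\<bar> \<le> norm y" "g (a - x) = norm (a - x)"
      using norming by blast
    have gd: "g (y - z) = g y - g z" for y z using g(1) by (simp add: linear_diff bounded_linear.linear)
    have "norm (a - x) \<le> r + e" if e: "e > 0" for e
    proof -
      have "ereal (- g x) \<le> limsup (\<lambda>n. ereal (- g (v n)))"
        using A[of "\<lambda>y. - g y"] g(1) bounded_linear_minus by blast
      also have "\<dots> \<le> ereal (r + e - g a)"
      proof (rule Limsup_bounded)
        show "eventually (\<lambda>n. ereal (- g (v n)) \<le> ereal (r + e - g a)) sequentially"
          using ev[OF e]
        proof (rule eventually_mono)
          fix n assume "norm (a - v n) \<le> r + e"
          moreover have "g (a - v n) \<le> norm (a - v n)" using g(2) by (meson abs_le_D1)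
          ultimately show "ereal (- g (v n)) \<le> ereal (r + e - g a)" using gd[of a "v n"] by simp
        qed
      qed
      finally have "- g x \<le> r + e - g a" by simp
      then show ?thesis using g(3) gd[of a x] by simp
    qed
    then show ?thesis by (rule field_le_epsilon)
  qed
  show ?thesis using xC xr Bf0 by blast
qed


lemma nearest_point:
  fixes C0 :: "'a::real_normed_vector set"
  assumes refl: "reflexive_space TYPE('a)" and cl: "closed C0" and cv: "convex C0" and ne: "C0 \<noteq> {}"
  shows "\<exists>z\<in>C0. \<forall>y\<in>C0. norm (a - z) \<le> norm (a - y)"
proof -
  define d where "d = infdist a C0"
  have bdd: "bdd_below ((\<lambda>y. dist a y) ` C0)" by (rule bdd_belowI2[where m=0]) simp
  have "\<exists>y\<in>C0. dist a y < d + 1 / Suc n" for n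
  proof -
    have "infdist a C0 < d + 1 / Suc n" by (simp add: d_def)
    then show ?thesis unfolding infdist_notempty[OF ne] using cINF_less_iff[OF ne bdd] by blast
  qed
  then obtain v where vC: "\<And>n. v n \<in> C0" and vd: "\<And>n. dist a (v n) < d + 1 / Suc n"
    by metis
  have ev: "eventually (\<lambda>n. norm (a - v n) \<le> d + e) sequentially" if e: "e > 0" for e
  proof -
    obtain N where N: "inverse (real (Suc N)) < e" using reals_Archimedean[OF e] by blast
    show ?thesis unfolding eventually_sequentially
    proof (intro exI allI impI)
      fix n assume "N \<le> n"
      then have 1: "1 / real (Suc n) \<le> 1 / real (Suc N)" by (simp add: frac_le)
      have 2: "norm (a - v n) < d + 1 / real (Suc n)" using vd[of n] by (simp only: dist_norm)
      have 3: "1 / real (Suc N) < e" using N by (simp only: inverse_eq_divide)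
      show "norm (a - v n) \<le> d + e" using 1 2 3 by linarith
    qed
  qed
  obtain x where x: "x \<in> C0" "norm (a - x) \<le> d"
    using key[OF refl cl cv vC ev, of "\<lambda>_. 0"] bounded_linear_zero by blast
  have "norm (a - x) \<le> norm (a - y)" if "y \<in> C0" for y
    using x(2) infdist_le[OF that, of a] by (simp add: d_def dist_norm)
  with x(1) show ?thesis by blast
qed

lemma unique_nearest:
  fixes C0 :: "'a::real_normed_vector set"
  assumes sc: "strictly_convex_space TYPE('a)" and cv: "convex C0"
    and z: "z \<in> C0" and x: "x \<in> C0" and zmin: "\<forall>y\<in>C0. norm (a - z) \<le> norm (a - y)"
    and xle: "norm (a - x) \<le> norm (a - z)"
  shows "x = z"
proof (rule ccontr)
  assume xz: "x \<noteq> z"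
  define d where "d = norm (a - z)"
  have xd: "norm (a - x) = d" using zmin x xle by (simp add: d_def antisym)
  show False
  proof (cases "d = 0")
    case True
    then show False using xd xz by (simp add: d_def)
  next
    case False
    then have d: "d > 0" by (simp add: d_def)
    define u where "u = (1 / d) *\<^sub>R (a - x)"
    define w where "w = (1 / d) *\<^sub>R (a - z)"
    have nu: "norm u = 1" using xd d by (simp add: u_def)
    have nw: "norm w = 1" using d by (simp add: w_def d_def)
    have "u \<noteq> w"
    proof
      assume "u = w"
      then have "d *\<^sub>R u = d *\<^sub>R w" by simp
      then have "a - x = a - z" using d by (simp add: u_def w_def)
      then show False using xz by simp
    qed
    then have lt: "norm ((1/2) *\<^sub>R (u + w)) < 1" using sc nu nw unfolding strictly_convex_space_def by blast
    define m where "m = (1/2) *\<^sub>R x + (1/2) *\<^sub>R z"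
    have mC: "m \<in> C0" unfolding m_def using cv x z by (intro convexD) auto
    have half: "(1/2::real) *\<^sub>R a + (1/2) *\<^sub>R a = a"
    proof -
      have "(1/2::real) *\<^sub>R a + (1/2) *\<^sub>R a = ((1/2) + (1/2::real)) *\<^sub>R a"
        by (rule scaleR_add_left[symmetric])
      then show ?thesis by simp
    qed
    have "a - m = d *\<^sub>R ((1/2) *\<^sub>R (u + w))"
      using d by (simp add: m_def u_def w_def algebra_simps half)
    then have "norm (a - m) = d * norm ((1/2) *\<^sub>R (u + w))" using d by simp
    also have "\<dots> < d" using lt d by simp
    finally show False using zmin mC by (simp add: d_def) (smt (verit))
  qed
qed

lemma topspace_weak: "topspace (weak_topology :: 'a::real_normed_vector topology) = UNIV"
proof -
  have "UNIV \<in> {f -` U | f U. bounded_linear (f :: 'a \<Rightarrow> real) \<and> open U}"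
    by (rule CollectI, rule exI[of _ "\<lambda>_::'a. 0::real"], rule exI[of _ UNIV]) (simp add: bounded_linear_zero)
  then show ?thesis unfolding weak_topology_def topology_generated_by_topspace by blast
qed

lemma weak_limitin:
  fixes w :: "nat \<Rightarrow> 'a::real_normed_vector"
  assumes wC: "\<And>n. w n \<in> C" and zC: "z \<in> C"
    and conv: "\<And>f::'a \<Rightarrow> real. bounded_linear f \<Longrightarrow> ((\<lambda>n. f (w n)) \<longlongrightarrow> f z) sequentially"
  shows "limitin (subtopology weak_topology C) w z sequentially"
proof -
  have gen: "z \<in> U \<longrightarrow> eventually (\<lambda>n. w n \<in> U) sequentially"
    if "generate_topology_on {f -` U | f U. bounded_linear (f :: 'a \<Rightarrow> real) \<and> open U} U" for U
    using that
  proof (induction rule: generate_topology_on.induct)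
    case Empty then show ?case by simp
  next
    case (Int a b) then show ?case by (auto intro: eventually_conj)
  next
    case (UN K)
    show ?case
    proof
      assume "z \<in> \<Union>K"
      then obtain X where X: "X \<in> K" "z \<in> X" by blast
      with UN.IH have "eventually (\<lambda>n. w n \<in> X) sequentially" by blast
      then show "eventually (\<lambda>n. w n \<in> \<Union>K) sequentially"
        by (rule eventually_mono) (use X in blast)
    qed
  next
    case (Basis s)
    then obtain f :: "'a \<Rightarrow> real" and V :: "real set" where fV: "s = f -` V" "bounded_linear f" "open V" by blast
    show ?case
    proof
      assume "z \<in> s"
      then have "f z \<in> V" using fV by simp
      then have "eventually (\<lambda>n. f (w n) \<in> V) sequentially"
        using topological_tendstoD[OF conv[OF fV(2)] fV(3)] by blast
      then show "eventually (\<lambda>n. w n \<in> s) sequentially" using fV(1) by simp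
    qed
  qed
  have "limitin weak_topology w z sequentially"
    unfolding limitin_def topspace_weak
  proof (intro conjI allI impI)
    show "z \<in> UNIV" by simp
    fix U assume U: "openin weak_topology U \<and> z \<in> U"
    then have "generate_topology_on {f -` U | f U. bounded_linear (f :: 'a \<Rightarrow> real) \<and> open U} U"
      unfolding weak_topology_def openin_topology_generated_by_iff by blast
    with gen U show "eventually (\<lambda>n. w n \<in> U) sequentially" by blast
  qed
  note L = this
  show ?thesis unfolding limitin_subtopology
  proof (intro conjI)
    show "z \<in> C" by (rule zC)
    show "eventually (\<lambda>n. w n \<in> C) sequentially" by (rule always_eventually) (use wC in blast)
    show "limitin weak_topology w z sequentially" by (rule L)
  qed
qed

lemma weak_limitin_D:
  fixes u :: "nat \<Rightarrow> 'a::real_normed_vector" and f :: "'a \<Rightarrow> real"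
  assumes lim: "limitin (subtopology weak_topology C) u y sequentially" and f: "bounded_linear f"
  shows "((\<lambda>n. f (u n)) \<longlongrightarrow> f y) sequentially"
proof (rule topological_tendstoI)
  fix V assume V: "open V" "f y \<in> V"
  have "openin weak_topology (f -` V)"
    unfolding weak_topology_def by (rule topology_generated_by_Basis) (use f V in blast)
  moreover have "limitin weak_topology u y sequentially" using lim[unfolded limitin_subtopology] by blast
  ultimately have "eventually (\<lambda>n. u n \<in> f -` V) sequentially"
    using V(2) unfolding limitin_def by blast
  then show "eventually (\<lambda>n. f (u n) \<in> V) sequentially" by simp
qed

theorem proposition3p5:
  fixes C :: "'a::banach set" and T :: "'s::semigroup_mult \<Rightarrow> 'a \<Rightarrow> 'a"
  assumes "reflexive_space TYPE('a)"
    and "strictly_convex_space TYPE('a)"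
    and "closed C" and "convex C"
    and "representation_on C T"
    and "\<And>s. continuous_map (subtopology weak_topology C) (subtopology weak_topology C) (T s)"
    and "\<And>s. asymp_nonexpansive_on C (T s)"
  shows "((\<exists>C0. C0 \<noteq> {} \<and> C0 \<subseteq> C \<and> closed C0 \<and> convex C0 \<and> invariant_under C0 T
              \<and> attractive_points C0 T \<noteq> {})
          \<longleftrightarrow> (\<exists>C0. C0 \<noteq> {} \<and> C0 \<subseteq> C \<and> closed C0 \<and> convex C0 \<and> invariant_under C0 T
              \<and> asymp_attractive_points C0 T \<noteq> {}))
       \<and> ((\<exists>C0. C0 \<noteq> {} \<and> C0 \<subseteq> C \<and> closed C0 \<and> convex C0 \<and> invariant_under C0 T
              \<and> asymp_attractive_points C0 T \<noteq> {})
          \<longleftrightarrow> (\<exists>x\<in>C. \<forall>s. T s x = x))"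
proof -
  note refl = assms(1) and sc = assms(2) and cont = assms(6)
  have orbit: "(T t ^^ n) x \<in> C0" if "invariant_under C0 T" "x \<in> C0" for C0 t n x
    using that by (induction n) (auto simp: invariant_under_def)
  have fix_to_1: "\<exists>C0. C0 \<noteq> {} \<and> C0 \<subseteq> C \<and> closed C0 \<and> convex C0 \<and> invariant_under C0 T
              \<and> attractive_points C0 T \<noteq> {}" if "x \<in> C" "\<forall>s. T s x = x" for x
  proof (intro exI[of _ "{x}"] conjI)
    show "invariant_under {x} T" using that by (simp add: invariant_under_def)
    show "attractive_points {x} T \<noteq> {}" using that by (auto simp: attractive_points_def)
  qed (use that in auto)
  have one_to_2: "\<exists>C0. C0 \<noteq> {} \<and> C0 \<subseteq> C \<and> closed C0 \<and> convex C0 \<and> invariant_under C0 T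
              \<and> asymp_attractive_points C0 T \<noteq> {}"
    if "C0 \<noteq> {}" "C0 \<subseteq> C" "closed C0" "convex C0" "invariant_under C0 T" "a \<in> attractive_points C0 T"
    for C0 a
  proof (intro exI[of _ C0] conjI)
    have "a \<in> asymp_attractive_points C0 T"
      unfolding asymp_attractive_points_def
    proof (intro CollectI ballI allI)
      fix x t assume x: "x \<in> C0"
      have "norm (a - (T t ^^ n) x) \<le> norm (a - x)" for n
      proof (induction n)
        case (Suc n)
        have "norm (a - T t ((T t ^^ n) x)) \<le> norm (a - (T t ^^ n) x)"
          using that(6) orbit[OF that(5) x] by (auto simp: attractive_points_def)
        then show ?case using Suc by simp
      qed simp
      then show "limsup (\<lambda>n. ereal (norm (a - (T t ^^ n) x))) \<le> ereal (norm (a - x))"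
        by (intro Limsup_bounded) simp
    qed
    then show "asymp_attractive_points C0 T \<noteq> {}" by blast
  qed (use that in auto)
  have two_to_3: "\<exists>x\<in>C. \<forall>s. T s x = x"
    if ne: "C0 \<noteq> {}" and sub: "C0 \<subseteq> C" and cl: "closed C0" and cv: "convex C0"
      and inv: "invariant_under C0 T" and a: "a \<in> asymp_attractive_points C0 T" for C0 a
  proof -
    obtain z where z: "z \<in> C0" and zmin: "\<forall>y\<in>C0. norm (a - z) \<le> norm (a - y)"
      using nearest_point[OF refl cl cv ne] by blast
    have "T t z = z" for t
    proof -
      define w where "w = (\<lambda>n. (T t ^^ n) z)"
      have wC0: "w n \<in> C0" for n unfolding w_def by (rule orbit[OF inv z])
      have ls: "limsup (\<lambda>n. ereal (norm (a - w n))) \<le> ereal (norm (a - z))"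
        using a z by (auto simp: asymp_attractive_points_def w_def)
      have ev: "eventually (\<lambda>n. norm (a - w n) \<le> norm (a - z) + e) sequentially" if e: "e > 0" for e
      proof -
        have "limsup (\<lambda>n. ereal (norm (a - w n))) < ereal (norm (a - z) + e)"
        proof -
          have "ereal (norm (a - z)) < ereal (norm (a - z) + e)" using e by simp
          with ls show ?thesis by (rule le_less_trans)
        qed
        from Limsup_lessD[OF this] show ?thesis by (auto elim!: eventually_mono)
      qed
      have lsf: "ereal (f z) = limsup (\<lambda>n. ereal (f (w n)))" if f: "bounded_linear f" for f :: "'a \<Rightarrow> real"
      proof -
        obtain x where x: "x \<in> C0" "norm (a - x) \<le> norm (a - z)"
          "ereal (f x) = limsup (\<lambda>n. ereal (f (w n)))"
          using key[OF refl cl cv wC0 ev f] by blast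
        have "x = z" by (rule unique_nearest[OF sc cv z x(1) zmin x(2)])
        then show ?thesis using x(3) by simp
      qed
      have wconv: "((\<lambda>n. f (w n)) \<longlongrightarrow> f z) sequentially" if f: "bounded_linear f" for f :: "'a \<Rightarrow> real"
      proof -
        have 1: "ereal (f z) = limsup (\<lambda>n. ereal (f (w n)))" by (rule lsf[OF f])
        have "ereal (- f z) = limsup (\<lambda>n. ereal (- f (w n)))"
          using lsf[of "\<lambda>y. - f y"] f bounded_linear_minus by blast
        also have "\<dots> = limsup (\<lambda>n. - ereal (f (w n)))" by simp
        also have "\<dots> = - liminf (\<lambda>n. ereal (f (w n)))" by (rule ereal_Limsup_uminus)
        finally have 2: "ereal (f z) = liminf (\<lambda>n. ereal (f (w n)))"
          by (metis ereal_uminus_uminus uminus_ereal.simps(1))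
        show ?thesis by (rule limsup_le_liminf_real) (use 1 2 in auto)
      qed
      have wC: "w n \<in> C" for n using wC0 sub by blast
      have lim: "limitin (subtopology weak_topology C) w z sequentially"
        by (rule weak_limitin[OF wC]) (use z sub wconv in auto)
      have lim2: "limitin (subtopology weak_topology C) (T t \<circ> w) (T t z) sequentially"
        by (rule continuous_map_limit[OF cont lim])
      have "f (T t z) = f z" if f: "bounded_linear f" for f :: "'a \<Rightarrow> real"
      proof -
        have "((\<lambda>n. f ((T t \<circ> w) n)) \<longlongrightarrow> f (T t z)) sequentially"
          by (rule weak_limitin_D[OF lim2 f])
        moreover have "(T t \<circ> w) n = w (Suc n)" for n by (simp add: w_def)
        ultimately have "((\<lambda>n. f (w (Suc n))) \<longlongrightarrow> f (T t z)) sequentially" by simp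
        moreover have "((\<lambda>n. f (w (Suc n))) \<longlongrightarrow> f z) sequentially"
          using LIMSEQ_Suc[OF wconv[OF f]] .
        ultimately show ?thesis using LIMSEQ_unique by blast
      qed
      then show ?thesis by (rule separate_points)
    qed
    then show ?thesis using z sub by blast
  qed
  have A12: "\<exists>C0. C0 \<noteq> {} \<and> C0 \<subseteq> C \<and> closed C0 \<and> convex C0 \<and> invariant_under C0 T
              \<and> asymp_attractive_points C0 T \<noteq> {}"
    if "\<exists>C0. C0 \<noteq> {} \<and> C0 \<subseteq> C \<and> closed C0 \<and> convex C0 \<and> invariant_under C0 T
              \<and> attractive_points C0 T \<noteq> {}"
  proof -
    from that obtain C0 where C0: "C0 \<noteq> {}" "C0 \<subseteq> C" "closed C0" "convex C0" "invariant_under C0 T"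
      "attractive_points C0 T \<noteq> {}" by blast
    from C0(6) obtain a where a: "a \<in> attractive_points C0 T" by blast
    show ?thesis by (rule one_to_2[OF C0(1-5) a])
  qed
  have A23: "\<exists>x\<in>C. \<forall>s. T s x = x"
    if "\<exists>C0. C0 \<noteq> {} \<and> C0 \<subseteq> C \<and> closed C0 \<and> convex C0 \<and> invariant_under C0 T
              \<and> asymp_attractive_points C0 T \<noteq> {}"
  proof -
    from that obtain C0 where C0: "C0 \<noteq> {}" "C0 \<subseteq> C" "closed C0" "convex C0" "invariant_under C0 T"
      "asymp_attractive_points C0 T \<noteq> {}" by blast
    from C0(6) obtain a where a: "a \<in> asymp_attractive_points C0 T" by blast
    show ?thesis by (rule two_to_3[OF C0(1-5) a])
  qed
  have A31: "\<exists>C0. C0 \<noteq> {} \<and> C0 \<subseteq> C \<and> closed C0 \<and> convex C0 \<and> invariant_under C0 T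
              \<and> attractive_points C0 T \<noteq> {}"
    if "\<exists>x\<in>C. \<forall>s. T s x = x"
  proof -
    from that obtain x where "x \<in> C" "\<forall>s. T s x = x" by blast
    then show ?thesis by (rule fix_to_1)
  qed
  show ?thesis using A12 A23 A31 by blast
qed

end
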